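(* Let $p$ be an odd prime and let $\nu$ and $l$ be positive integers. If $2^{\nu+1}\nmid(p^l+1)$, then \[t(2^{\nu+1},p^l):=\frac{\phi(2^{\nu+1})}{2\operatorname{ord}_{2^{\nu+1}}(p^{l})}=\gcd(2^{\nu-1},\alpha_p l).\] In particular, if $p=5$, then $t(2^{\nu+1},5^l)=\gcd(2^{\nu-1},l)$.
   Context: $\phi$ is Euler's totient function and $\operatorname{ord}_m(x)$ is the multiplicative order of $x$ modulo $m$. For an odd prime $p$ and $\nu\geq1$, $\alpha_p$ denotes the unique integer in $\{0,1,\dots,2^{\nu-1}-1\}$ such that $p\equiv 5^{\alpha_p}\pmod{2^{\nu+1}}$ if $p\equiv1\pmod 4$, and $p\equiv -5^{\alpha_p}\pmod{2^{\nu+1}}$ if $p\equiv 3\pmod 4$ (so $\alpha_p=0$ when $\nu=1$). *)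

theory Defs
  imports "HOL-Number_Theory.Number_Theory"
begin

definition alpha :: "nat \<Rightarrow> nat \<Rightarrow> nat" where
  "alpha p \<nu> = (THE a. a < 2 ^ (\<nu> - 1) \<and>
      (if p mod 4 = 1 then [int p = 5 ^ a] (mod 2 ^ (\<nu> + 1))
       else [int p = - (5 ^ a)] (mod 2 ^ (\<nu> + 1))))"

definition t_index :: "nat \<Rightarrow> nat \<Rightarrow> real" where
  "t_index m q = real (totient m) / (2 * real (ord m q))"

end

theory Submission
  imports Defs
begin

lemma ord5: assumes "\<nu> > 0" shows "ord (2 ^ (\<nu> + 1)) (5::nat) = 2 ^ (\<nu> - 1)"
proof (cases "\<nu> = 1")
  case True
  then show ?thesis by (simp add: ord_eq_Suc_0_iff cong_def)
next
  case False
  then have "\<nu> + 1 \<ge> 3" using assms by simp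
  from ord_twopow_3_5[OF this, of 5] show ?thesis by simp
qed

lemma coprime5: "coprime (2 ^ n) (5::nat)"
  by (simp add: coprime_commute coprime_power_right_iff)

lemma pow5_inj:
  assumes "\<nu> > 0" "a < 2 ^ (\<nu> - 1)" "b < 2 ^ (\<nu> - 1)"
    "[(5::nat) ^ a = 5 ^ b] (mod 2 ^ (\<nu> + 1))"
  shows "a = (b::nat)"
proof -
  have "[a = b] (mod 2 ^ (\<nu> - 1))"
    using assms(4) order_divides_expdiff[OF coprime5[of "\<nu>+1"], where d=a and e=b] ord5[OF assms(1)] by simp
  then show ?thesis using assms(2,3) by (simp add: cong_def)
qed

lemma pow5_surj:
  assumes "\<nu> > 0" "x mod 4 = (1::nat)"
  shows "\<exists>a < 2 ^ (\<nu> - 1). [5 ^ a = x] (mod 2 ^ (\<nu> + 1))"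
proof -
  define m :: nat where "m = 2 ^ (\<nu> + 1)"
  define N :: nat where "N = 2 ^ (\<nu> - 1)"
  have mN: "m = 4 * N" using assms(1) unfolding m_def N_def
    by (cases \<nu>) (auto simp: power_add)
  define f where "f a = (5::nat) ^ a mod m" for a
  define T where "T = {x. x < m \<and> x mod 4 = (1::nat)}"
  have inj: "inj_on f {..<N}"
    by (intro inj_onI) (use pow5_inj[OF assms(1)] in \<open>auto simp: f_def N_def m_def cong_def\<close>)
  have T_eq: "T = (\<lambda>j. 4 * j + 1) ` {..<N}"
  proof -
   have "y \<in> T \<longleftrightarrow> y \<in> (\<lambda>j. 4 * j + 1) ` {..<N}" for y
   proof
    assume "y \<in> T"
    then have y1: "y < 4 * N" "y mod 4 = 1" unfolding T_def using mN by auto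
    then have "y = 4 * (y div 4) + 1" "y div 4 < N" by presburger+
    then show "y \<in> (\<lambda>j. 4 * j + 1) ` {..<N}" by blast
  next
    assume "y \<in> (\<lambda>j. 4 * j + 1) ` {..<N}"
    then show "y \<in> T" unfolding T_def using mN by auto
   qed
   then show ?thesis by blast
  qed
  have cT: "card T = N" unfolding T_eq by (subst card_image) (auto simp: inj_on_def)
  have "4 dvd m" using mN by simp
  have sub: "f ` {..<N} \<subseteq> T"
  proof
    fix y assume "y \<in> f ` {..<N}"
    then obtain a where y: "y = 5 ^ a mod m" unfolding f_def by auto
    have "m > 0" unfolding m_def by simp
    moreover have "y mod 4 = 5 ^ a mod 4" using y \<open>4 dvd m\<close> by (simp add: mod_mod_cancel)
    moreover have "(5::nat) ^ a mod 4 = 1" by (induction a) (auto simp: mod_mult_eq[symmetric])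
    ultimately show "y \<in> T" using y unfolding T_def by auto
  qed
  have "card (f ` {..<N}) = N" using inj by (simp add: card_image)
  then have eq: "f ` {..<N} = T" using sub cT
    by (intro card_subset_eq) (auto simp: T_eq)
  have "N > 0" unfolding N_def by simp
  have "x mod m \<in> T" unfolding T_def using \<open>4 dvd m\<close> assms(2) mN \<open>N > 0\<close>
    by (auto simp: mod_mod_cancel)
  then obtain a where "a < N" "f a = x mod m" using eq by force
  then show ?thesis unfolding f_def N_def m_def cong_def by auto
qed


lemma pow5_surj_int:
  assumes "\<nu> > 0" "z mod 4 = (1::int)"
  shows "\<exists>a < 2 ^ (\<nu> - 1). [5 ^ a = z] (mod 2 ^ (\<nu> + 1))"
proof -
  define M :: int where "M = 2 ^ (\<nu> + 1)"
  have "M > 0" "4 dvd M" using assms(1) unfolding M_def by (cases \<nu>; simp add: power_add)+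
  define x where "x = nat (z mod M)"
  have xi: "int x = z mod M" unfolding x_def using \<open>M > 0\<close> by simp
  have "int x mod 4 = z mod 4" unfolding xi using \<open>4 dvd M\<close> by (simp add: mod_mod_cancel)
  then have "x mod 4 = 1" using assms(2) by presburger
  from pow5_surj[OF assms(1) this] obtain a where a: "a < 2 ^ (\<nu> - 1)" "[5 ^ a = x] (mod 2 ^ (\<nu> + 1))" by blast
  then have "[int (5 ^ a) = int x] (mod int (2 ^ (\<nu> + 1)))" using cong_int_iff by blast
  then have "[5 ^ a = z mod M] (mod M)" unfolding xi M_def by simp
  then have "[5 ^ a = z] (mod M)" by (simp add: cong_def)
  with a show ?thesis unfolding M_def by blast
qed

lemma alpha_spec:
  assumes "\<nu> > 0" "odd p"
  shows "alpha p \<nu> < 2 ^ (\<nu> - 1) \<and>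
      (if p mod 4 = 1 then [int p = 5 ^ alpha p \<nu>] (mod 2 ^ (\<nu> + 1))
       else [int p = - (5 ^ alpha p \<nu>)] (mod 2 ^ (\<nu> + 1)))"
proof -
  define P where "P a = (a < 2 ^ (\<nu> - 1) \<and>
      (if p mod 4 = 1 then [int p = 5 ^ a] (mod 2 ^ (\<nu> + 1))
       else [int p = - (5 ^ a)] (mod 2 ^ (\<nu> + 1))))" for a
  have ex: "\<exists>a. P a"
  proof (cases "p mod 4 = 1")
    case True
    then have "int p mod 4 = 1" by presburger
    from pow5_surj_int[OF assms(1) this] obtain a where "a < 2 ^ (\<nu> - 1)" "[5 ^ a = int p] (mod 2 ^ (\<nu> + 1))" by blast
    then show ?thesis using True unfolding P_def by (auto intro: cong_sym)
  next
    case False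
    then have "(- int p) mod 4 = 1" using assms(2) by presburger
    from pow5_surj_int[OF assms(1) this] obtain a where "a < 2 ^ (\<nu> - 1)" "[5 ^ a = - int p] (mod 2 ^ (\<nu> + 1))" by blast
    then have "[int p = - (5 ^ a)] (mod 2 ^ (\<nu> + 1))"
      by (metis cong_minus_minus_iff cong_sym minus_minus)
    then show ?thesis using False \<open>a < _\<close> unfolding P_def by auto
  qed
  have uniq: "a = b" if "P a" "P b" for a b
  proof -
    have "[(5::int) ^ a = 5 ^ b] (mod 2 ^ (\<nu> + 1))"
    proof (cases "p mod 4 = 1")
      case True
      then show ?thesis using that unfolding P_def by (auto intro: cong_sym cong_trans)
    next
      case False
      then have "[- ((5::int) ^ a) = - (5 ^ b)] (mod 2 ^ (\<nu> + 1))" using that unfolding P_def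
        by (auto intro: cong_sym cong_trans)
      then show ?thesis using cong_minus_minus_iff by blast
    qed
    then have "[int (5 ^ a) = int (5 ^ b)] (mod int (2 ^ (\<nu> + 1)))" by simp
    then have "[(5::nat) ^ a = 5 ^ b] (mod 2 ^ (\<nu> + 1))" using cong_int_iff by blast
    then show ?thesis using pow5_inj[OF assms(1)] that unfolding P_def by blast
  qed
  have "P (THE a. P a)" using ex uniq by (metis theI)
  moreover have "alpha p \<nu> = (THE a. P a)" unfolding alpha_def P_def by (rule refl)
  ultimately have "P (alpha p \<nu>)" by simp
  then show ?thesis unfolding P_def .
qed

lemma pow_mod4: "(y::nat) mod 4 = 1 \<Longrightarrow> y ^ n mod 4 = 1"
proof (induction n)
  case (Suc n)
  have "y ^ Suc n mod 4 = ((y mod 4) * (y ^ n mod 4)) mod 4" by (simp only: power_Suc mod_mult_eq)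
  also have "\<dots> = 1" using Suc by simp
  finally show ?case .
qed simp

lemma ord_neg:
  assumes "[int x = - int y] (mod int m)" "4 dvd m" "y mod 4 = 1" "\<not> m dvd x + 1"
    "ord m y dvd 2 ^ j"
  shows "ord m x = ord m y"
proof -
  have key: "[int (x ^ n) = (-1) ^ n * int (y ^ n)] (mod int m)" for n
  proof -
    have "[int x ^ n = (- int y) ^ n] (mod int m)" using assms(1) by (rule cong_pow)
    then show ?thesis by (simp only: power_minus[of "int y" n] of_nat_power)
  qed
  have y4: "y ^ n mod 4 = 1" for n
    using assms(3) by (rule pow_mod4)
  have iff: "[x ^ n = 1] (mod m) \<longleftrightarrow> [y ^ n = 1] (mod m)" for n
  proof
    assume h: "[x ^ n = 1] (mod m)"
    have "even n"
    proof (rule ccontr)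
      assume "odd n"
      then have "[int (x ^ n) = - int (y ^ n)] (mod int m)" using key[of n] by simp
      moreover have "[int (x ^ n) = 1] (mod int m)" using h cong_int_iff[of "x ^ n" 1 m] by simp
      ultimately have "[- int (y ^ n) = 1] (mod int m)" by (meson cong_sym cong_trans)
      moreover have "int 4 dvd int m" using assms(2) by (simp only: int_dvd_int_iff)
      ultimately have "[- int (y ^ n) = 1] (mod 4)" using cong_dvd_modulus by simp
      moreover have "int (y ^ n) mod 4 = 1"
      proof -
        have "int (y ^ n mod 4) = 1" using y4[of n] by simp
        then show ?thesis by (simp add: of_nat_mod)
      qed
      ultimately have "(- int (y ^ n)) mod 4 = 1" "int (y ^ n) mod 4 = 1" unfolding cong_def by simp_all
      then show False by presburger
    qed
    then have "[int (x ^ n) = int (y ^ n)] (mod int m)" using key[of n] by simp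
    then have "[x ^ n = y ^ n] (mod m)" using cong_int_iff by blast
    then show "[y ^ n = 1] (mod m)" using h by (meson cong_sym cong_trans)
  next
    assume h: "[y ^ n = 1] (mod m)"
    then have d: "ord m y dvd n" using ord_divides by blast
    have "ord m y \<noteq> 1"
    proof
      assume "ord m y = 1"
      then have "[y = 1] (mod m)" using ord_eq_Suc_0_iff by simp
      then have "[int y = 1] (mod int m)" using cong_int_iff[of y 1 m] by simp
      then have "[- int y = - 1] (mod int m)" using cong_minus_minus_iff by blast
      with assms(1) have "[int x = - 1] (mod int m)" by (rule cong_trans)
      then have "[int x + 1 = -1 + 1] (mod int m)" by (intro cong_add) auto
      then have "int m dvd int x + 1" by (simp add: cong_0_iff)
      then have "int m dvd int (x + 1)" by (simp add: add.commute)
      then have "m dvd x + 1" by (simp only: int_dvd_int_iff)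
      with assms(4) show False by simp
    qed
    obtain i where "ord m y = 2 ^ i"
      using assms(5) divides_primepow_nat[of 2 "ord m y" j] by auto
    with \<open>ord m y \<noteq> 1\<close> have "i \<noteq> 0" by auto
    with \<open>ord m y = 2 ^ i\<close>
    have "even (ord m y)" by simp
    then have "even n" using d by (meson dvd_trans)
    then have "[int (x ^ n) = int (y ^ n)] (mod int m)" using key[of n] by simp
    then have "[x ^ n = y ^ n] (mod m)" using cong_int_iff by blast
    then show "[x ^ n = 1] (mod m)" using h by (meson cong_trans)
  qed
  show ?thesis
  proof (rule dvd_antisym)
    have "[y ^ ord m y = 1] (mod m)" by (rule ord)
    then have "[x ^ ord m y = 1] (mod m)" using iff by simp
    then show "ord m x dvd ord m y" by (simp only: ord_divides)
    have "[x ^ ord m x = 1] (mod m)" by (rule ord)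
    then have "[y ^ ord m x = 1] (mod m)" using iff by simp
    then show "ord m y dvd ord m x" by (simp only: ord_divides)
  qed
qed

lemma t_from_ord:
  assumes "\<nu> > 0" "ord (2 ^ (\<nu> + 1)) q = ord (2 ^ (\<nu> + 1)) ((5::nat) ^ k)"
  shows "t_index (2 ^ (\<nu> + 1)) q = real (gcd (2 ^ (\<nu> - 1)) k)"
proof -
  define g where "g = gcd (2 ^ (\<nu> - 1)) k"
  have o: "ord (2 ^ (\<nu> + 1)) q = 2 ^ (\<nu> - 1) div g"
    using assms(2) ord_power[OF coprime5[of "\<nu>+1"], of k] ord5[OF assms(1)]
    by (simp add: g_def gcd.commute)
  have tot: "totient (2 ^ (\<nu> + 1)) = 2 ^ \<nu>"
    using totient_prime_power_Suc[of 2 \<nu>] by simp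
  have "g dvd 2 ^ (\<nu> - 1)" unfolding g_def by simp
  then obtain r where r: "2 ^ (\<nu> - 1) = g * r" by blast
  have "g > 0" unfolding g_def by simp
  have "r > 0" using r by (metis gr0I mult_0_right power_not_zero zero_neq_numeral)
  have div: "2 ^ (\<nu> - 1) div g = r" using r \<open>g > 0\<close> by simp
  have "(2::nat) ^ \<nu> = 2 * 2 ^ (\<nu> - 1)" using assms(1) by (cases \<nu>) auto
  then have "(2::nat) ^ \<nu> = 2 * g * r" using r by simp
  then have "real (2 ^ \<nu>) = 2 * real g * real r" by (metis of_nat_mult of_nat_numeral)
  then show ?thesis unfolding t_index_def o tot div g_def[symmetric] using \<open>r > 0\<close> by simp
qed

theorem corollary3p10:
  fixes p \<nu> l :: nat
  assumes "prime p" and "odd p" and "\<nu> > 0" and "l > 0"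
  shows "(\<not> (2 ^ (\<nu> + 1) dvd p ^ l + 1) \<longrightarrow>
           t_index (2 ^ (\<nu> + 1)) (p ^ l) = real (gcd (2 ^ (\<nu> - 1)) (alpha p \<nu> * l)))
       \<and> t_index (2 ^ (\<nu> + 1)) (5 ^ l) = real (gcd (2 ^ (\<nu> - 1)) l)"
proof
  show "t_index (2 ^ (\<nu> + 1)) (5 ^ l) = real (gcd (2 ^ (\<nu> - 1)) l)"
    using t_from_ord[OF assms(3)] by simp
  show "\<not> (2 ^ (\<nu> + 1) dvd p ^ l + 1) \<longrightarrow>
           t_index (2 ^ (\<nu> + 1)) (p ^ l) = real (gcd (2 ^ (\<nu> - 1)) (alpha p \<nu> * l))"
  proof
    assume nd: "\<not> (2 ^ (\<nu> + 1) dvd p ^ l + 1)"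
    define a where "a = alpha p \<nu>"
    define m :: nat where "m = 2 ^ (\<nu> + 1)"
    have spec: "if p mod 4 = 1 then [int p = 5 ^ a] (mod int m)
       else [int p = - (5 ^ a)] (mod int m)"
      using alpha_spec[OF assms(3,2)] unfolding a_def m_def of_nat_power of_nat_numeral by blast
    have "ord m (p ^ l) = ord m (5 ^ (a * l))"
    proof (cases "p mod 4 = 1")
      case True
      then have "[int p = int (5 ^ a)] (mod int m)" using spec by simp
      then have "[p = 5 ^ a] (mod m)" using cong_int_iff by blast
      then have "[p ^ l = (5 ^ a) ^ l] (mod m)" by (rule cong_pow)
      then show ?thesis by (simp add: power_mult ord_cong)
    next
      case False
      then have c: "[int p = - int (5 ^ a)] (mod int m)" using spec by simp
      then have "[int p ^ l = (- int (5 ^ a)) ^ l] (mod int m)" by (rule cong_pow)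
      moreover have e: "(- int (5 ^ a)) ^ l = (-1) ^ l * int (5 ^ (a * l))"
        by (subst power_minus) (simp add: power_mult)
      ultimately have k: "[int (p ^ l) = (-1) ^ l * int (5 ^ (a * l))] (mod int m)"
        unfolding of_nat_power by (simp only: e[unfolded of_nat_power])
      show ?thesis
      proof (cases "even l")
        case True
        then have "[int (p ^ l) = int (5 ^ (a * l))] (mod int m)" using k by simp
        then have "[p ^ l = 5 ^ (a * l)] (mod m)" using cong_int_iff by blast
        then show ?thesis by (rule ord_cong)
      next
        case False
        then have k2: "[int (p ^ l) = - int (5 ^ (a * l))] (mod int m)" using k by simp
        have "4 dvd m" unfolding m_def using assms(3) by (cases \<nu>) (auto simp: power_add)
        have y4: "(5::nat) ^ (a * l) mod 4 = 1" by (rule pow_mod4) simp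
        have "[(5 ^ (a * l)) ^ (ord m 5) = (1::nat)] (mod m)"
        proof -
          have "[(5::nat) ^ (ord m 5) = 1] (mod m)" by (rule ord)
          then have "[((5::nat) ^ (ord m 5)) ^ (a * l) = 1 ^ (a * l)] (mod m)" by (rule cong_pow)
          then show ?thesis by (simp add: power_mult[symmetric] mult.commute)
        qed
        then have "ord m (5 ^ (a * l)) dvd ord m 5" using ord_divides by blast
        then have "ord m (5 ^ (a * l)) dvd 2 ^ (\<nu> - 1)" using ord5[OF assms(3)] unfolding m_def by simp
        from ord_neg[OF k2 \<open>4 dvd m\<close> y4 _ this] nd show ?thesis unfolding m_def by simp
      qed
    qed
    then show "t_index (2 ^ (\<nu> + 1)) (p ^ l) = real (gcd (2 ^ (\<nu> - 1)) (alpha p \<nu> * l))"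
      using t_from_ord[OF assms(3)] unfolding m_def a_def by simp
  qed
qed

end
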